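(* Let $d\ge2$, $\gamma\ge2d$ and $v\in\Lambda_\gamma=\{0,\dots,\gamma-1\}^{\mathbb Z^d}$. The following are equivalent: (1) $v\in\mathcal R_\infty^{(\gamma)}$; (2) for every nonzero $h\in R_d$ with all coefficients in $\{0,1\}$, there is $\mathbf n\in\mathrm{supp}(h)$ with $(f^{(d,\gamma)}\cdot h)_{\mathbf n}+v_{\mathbf n}\ge\gamma$; (3) for every $h\in R_d$ having at least one positive coefficient, there is $\mathbf n$ with $h_{\mathbf n}>0$ and $(f^{(d,\gamma)}\cdot h)_{\mathbf n}+v_{\mathbf n}\ge\gamma$. Furthermore, if $v,v'\in\mathcal R_\infty^{(\gamma)}$ and $0\ne v-v'\in R_d$, then $v-v'\notin f^{(d,\gamma)}\cdot R_d$.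
   Context: $R_d=\mathbb Z[u_1^{\pm1},\dots,u_d^{\pm1}]$, identified with finitely supported integer sequences on $\mathbb Z^d$; $\mathrm{supp}(h)=\{\mathbf n:h_{\mathbf n}\ne0\}$; $(a\cdot b)_{\mathbf n}=\sum_{\mathbf k}a_{\mathbf k}b_{\mathbf n-\mathbf k}$. $f^{(d,\gamma)}=\gamma-\sum_{i=1}^d(u_i+u_i^{-1})$. For a nonempty $F\subset\mathbb Z^d$ and $\mathbf n\in F$, $\mathsf N_F(\mathbf n)=|F\cap\{\mathbf n\pm\mathbf e^{(i)}:i=1,\dots,d\}|$ ($\mathbf e^{(i)}$ the unit vectors). The sandpile model with parameter $\gamma$ is $\mathcal R^{(\gamma)}_\infty=\{v\in\Lambda_\gamma:$ for every finite nonempty $F\subset\mathbb Z^d$ there is $\mathbf n\in F$ with $v_{\mathbf n}\ge\mathsf N_F(\mathbf n)\}$ (the recurrent configurations). *)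

theory Defs
  imports Main
begin

text \<open>Points of Z^d are integer lists of length d.  Finitely supported integer
sequences on Z^d (elements of R_d, Laurent polynomials) and configurations are
functions int list => int that vanish off Z^d.\<close>

definition pts :: "nat \<Rightarrow> int list set" where
  "pts d = {n. length n = d}"

definition vadd :: "int list \<Rightarrow> int list \<Rightarrow> int list" where
  "vadd a b = (if length a = length b then map2 (+) a b else a)"

definition vsub :: "int list \<Rightarrow> int list \<Rightarrow> int list" where
  "vsub a b = (if length a = length b then map2 (-) a b else a)"

definition vneg :: "int list \<Rightarrow> int list" where
  "vneg a = map uminus a"

definition unitv :: "nat \<Rightarrow> nat \<Rightarrow> int list" where
  "unitv d i = map (\<lambda>j. if j = i then 1 else 0) [0..<d]"

definition supp :: "(int list \<Rightarrow> int) \<Rightarrow> int list set" where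
  "supp h = {n. h n \<noteq> 0}"

definition Rd :: "nat \<Rightarrow> (int list \<Rightarrow> int) set" where
  "Rd d = {h. finite (supp h) \<and> supp h \<subseteq> pts d}"

definition conv :: "(int list \<Rightarrow> int) \<Rightarrow> (int list \<Rightarrow> int) \<Rightarrow> int list \<Rightarrow> int" where
  "conv a b n = (\<Sum>k\<in>supp a. a k * b (vsub n k))"

text \<open>f^(d,gamma) = gamma - sum_i (u_i + u_i^-1) as a coefficient sequence.\<close>
definition fpoly :: "nat \<Rightarrow> int \<Rightarrow> int list \<Rightarrow> int" where
  "fpoly d \<gamma> n =
     (if n = replicate d 0 then \<gamma>
      else if (\<exists>i<d. n = unitv d i \<or> n = vneg (unitv d i)) then -1 else 0)"

definition Lambda :: "nat \<Rightarrow> int \<Rightarrow> (int list \<Rightarrow> int) set" where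
  "Lambda d \<gamma> = {v. (\<forall>n\<in>pts d. 0 \<le> v n \<and> v n \<le> \<gamma> - 1) \<and> (\<forall>n. n \<notin> pts d \<longrightarrow> v n = 0)}"

definition nbcount :: "nat \<Rightarrow> int list set \<Rightarrow> int list \<Rightarrow> nat" where
  "nbcount d F n = card (F \<inter> {m. \<exists>i<d. m = vadd n (unitv d i) \<or> m = vsub n (unitv d i)})"

definition recurrent :: "nat \<Rightarrow> int \<Rightarrow> (int list \<Rightarrow> int) set" where
  "recurrent d \<gamma> = {v \<in> Lambda d \<gamma>. \<forall>F. finite F \<and> F \<noteq> {} \<and> F \<subseteq> pts d \<longrightarrow>
       (\<exists>n\<in>F. v n \<ge> int (nbcount d F n))}"

end

theory Submission
  imports Defs
begin

definition Nb :: "nat \<Rightarrow> int list \<Rightarrow> int list set" where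
  "Nb d n = {m. \<exists>i<d. m = vadd n (unitv d i) \<or> m = vsub n (unitv d i)}"

definition Ev :: "nat \<Rightarrow> int list set" where
  "Ev d = (\<lambda>i. unitv d i) ` {..<d} \<union> (\<lambda>i. vneg (unitv d i)) ` {..<d}"

lemma Nb_eq: "Nb d n = (\<lambda>i. vadd n (unitv d i)) ` {..<d} \<union> (\<lambda>i. vsub n (unitv d i)) ` {..<d}"
  unfolding Nb_def by auto

lemma Nb_fin: "finite (Nb d n)" unfolding Nb_eq by auto

lemma Nb_card: "card (Nb d n) \<le> 2 * d"
proof -
  have "card (Nb d n) \<le> card ((\<lambda>i. vadd n (unitv d i)) ` {..<d}) + card ((\<lambda>i. vsub n (unitv d i)) ` {..<d})"
    unfolding Nb_eq by (rule card_Un_le)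
  also have "\<dots> \<le> d + d" by (intro add_mono) (metis card_image_le card_lessThan finite_lessThan)+
  finally show ?thesis by simp
qed

lemma length_unitv[simp]: "length (unitv d i) = d" by (simp add: unitv_def)

lemma unitv_nth: "i < d \<Longrightarrow> unitv d i ! i = 1" by (simp add: unitv_def)

lemma Ev_len: "k \<in> Ev d \<Longrightarrow> length k = d" by (auto simp: Ev_def vneg_def)

lemma Z_notin_Ev: "replicate d 0 \<notin> Ev d"
proof
  assume "replicate d 0 \<in> Ev d"
  then obtain i where i: "i < d" and "replicate d 0 = unitv d i \<or> replicate d 0 = vneg (unitv d i)"
    unfolding Ev_def by auto
  moreover have "replicate d 0 ! i = (0::int)" using i by simp
  moreover have "vneg (unitv d i) ! i = -1" using i unitv_nth[OF i] by (simp add: vneg_def)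
  ultimately show False using unitv_nth[OF i] by (metis one_neq_zero zero_neq_neg_one)
qed

lemma supp_fpoly: "supp (fpoly d \<gamma>) \<subseteq> insert (replicate d 0) (Ev d)"
  by (auto simp: supp_def fpoly_def Ev_def split: if_splits)

lemma fpoly_Ev: assumes "k \<in> Ev d" shows "fpoly d \<gamma> k = -1"
proof -
  have "k \<noteq> replicate d 0" using Z_notin_Ev[of d] assms by auto
  moreover have "\<exists>i<d. k = unitv d i \<or> k = vneg (unitv d i)" using assms by (auto simp: Ev_def)
  ultimately show ?thesis by (simp add: fpoly_def)
qed

lemma fpoly_Z: "fpoly d \<gamma> (replicate d 0) = \<gamma>" by (simp add: fpoly_def)

lemma vsub_Z: "vsub n (replicate (length n) 0) = n"
  by (simp add: vsub_def list_eq_iff_nth_eq)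

lemma conv_superset:
  assumes "finite T" "supp a \<subseteq> T"
  shows "conv a b n = (\<Sum>k\<in>T. a k * b (vsub n k))"
  unfolding conv_def using assms by (intro sum.mono_neutral_left) (auto simp: supp_def)

lemma vsub_vneg: "length n = length u \<Longrightarrow> vsub n (vneg u) = vadd n u"
  by (simp add: vsub_def vadd_def vneg_def list_eq_iff_nth_eq)

lemma img_Ev: "length n = d \<Longrightarrow> (\<lambda>k. vsub n k) ` Ev d = Nb d n"
proof
  assume n: "length n = d"
  show "(\<lambda>k. vsub n k) ` Ev d \<subseteq> Nb d n" unfolding Ev_def Nb_eq using n by (auto simp: vsub_vneg)
  show "Nb d n \<subseteq> (\<lambda>k. vsub n k) ` Ev d"
  proof
    fix m assume "m \<in> Nb d n"
    then obtain i where i: "i < d" and m: "m = vadd n (unitv d i) \<or> m = vsub n (unitv d i)" unfolding Nb_def by auto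
    from m show "m \<in> (\<lambda>k. vsub n k) ` Ev d"
    proof (elim disjE)
      assume "m = vadd n (unitv d i)"
      then have "m = vsub n (vneg (unitv d i))" using n by (simp add: vsub_vneg)
      then show ?thesis using i unfolding Ev_def by blast
    next
      assume "m = vsub n (unitv d i)"
      then show ?thesis using i unfolding Ev_def by blast
    qed
  qed
qed

lemma inj_Ev: "length n = d \<Longrightarrow> inj_on (\<lambda>k. vsub n k) (Ev d)"
proof (rule inj_onI)
  fix k k' assume n: "length n = d" and k: "k \<in> Ev d" and k': "k' \<in> Ev d" and e: "vsub n k = vsub n k'"
  have l: "length k = d" "length k' = d" using Ev_len k k' by auto
  show "k = k'"
  proof (rule nth_equalityI)
    show "length k = length k'" using l by simp
    fix i assume "i < length k"
    then have "vsub n k ! i = vsub n k' ! i" using e by simp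
    then show "k ! i = k' ! i" using l n \<open>i < length k\<close> by (simp add: vsub_def)
  qed
qed

lemma fin_Ev: "finite (Ev d)" by (simp add: Ev_def)

lemma conv_formula:
  assumes "length n = d"
  shows "conv (fpoly d \<gamma>) h n = \<gamma> * h n - (\<Sum>m\<in>Nb d n. h m)"
proof -
  have "conv (fpoly d \<gamma>) h n = (\<Sum>k\<in>insert (replicate d 0) (Ev d). fpoly d \<gamma> k * h (vsub n k))"
    by (rule conv_superset) (use fin_Ev supp_fpoly in auto)
  also have "\<dots> = \<gamma> * h n + (\<Sum>k\<in>Ev d. - h (vsub n k))"
    using Z_notin_Ev[of d] fin_Ev[of d] vsub_Z[of n] assms
    by (simp add: fpoly_Z fpoly_Ev)
  also have "(\<Sum>k\<in>Ev d. - h (vsub n k)) = - (\<Sum>k\<in>Ev d. h (vsub n k))"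
    by (simp add: sum_negf)
  also have "(\<Sum>k\<in>Ev d. h (vsub n k)) = (\<Sum>m\<in>Nb d n. h m)"
    using sum.reindex[OF inj_Ev[OF assms], of h] img_Ev[OF assms] by (simp add: comp_def)
  finally show ?thesis by simp
qed


lemma ind_sum: "finite A \<Longrightarrow> (\<Sum>m\<in>A. (if m \<in> F then 1 else 0::int)) = int (card (F \<inter> A))"
  by (simp add: sum.If_cases Int_commute Int_def)

lemma nbcount_Nb: "nbcount d F n = card (F \<inter> Nb d n)"
  by (simp add: nbcount_def Nb_def)

lemma conv_ind:
  assumes "length n = d" "n \<in> F"
  shows "conv (fpoly d \<gamma>) (\<lambda>m. if m \<in> F then 1 else 0) n = \<gamma> - int (nbcount d F n)"
  using assms by (simp add: conv_formula ind_sum[OF Nb_fin] nbcount_Nb)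

lemma two_to_one:
  assumes v: "v \<in> Lambda d \<gamma>"
    and H: "\<forall>h\<in>Rd d. h \<noteq> (\<lambda>_. 0) \<and> (\<forall>n. h n \<in> {0, 1}) \<longrightarrow>
              (\<exists>n\<in>supp h. conv (fpoly d \<gamma>) h n + v n \<ge> \<gamma>)"
  shows "v \<in> recurrent d \<gamma>"
  unfolding recurrent_def
proof (intro CollectI conjI allI impI v)
  fix F :: "int list set" assume F: "finite F \<and> F \<noteq> {} \<and> F \<subseteq> pts d"
  define h where "h = (\<lambda>m. if m \<in> F then 1 else 0::int)"
  have sh: "supp h = F" by (auto simp: h_def supp_def)
  have "h \<in> Rd d" using F sh by (simp add: Rd_def)
  moreover have "h \<noteq> (\<lambda>_. 0)" using F sh by (auto simp: supp_def)
  moreover have "\<forall>n. h n \<in> {0,1}" by (simp add: h_def)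
  ultimately obtain n where n: "n \<in> F" and c: "conv (fpoly d \<gamma>) h n + v n \<ge> \<gamma>"
    using H sh by blast
  have "length n = d" using n F by (auto simp: pts_def)
  then have "conv (fpoly d \<gamma>) h n = \<gamma> - int (nbcount d F n)" using n by (simp add: h_def conv_ind)
  then show "\<exists>n\<in>F. int (nbcount d F n) \<le> v n" using c n by auto
qed

lemma three_to_two:
  assumes H: "\<forall>h\<in>Rd d. (\<exists>n. h n > 0) \<longrightarrow>
              (\<exists>n. h n > 0 \<and> conv (fpoly d \<gamma>) h n + v n \<ge> \<gamma>)"
  shows "\<forall>h\<in>Rd d. h \<noteq> (\<lambda>_. 0) \<and> (\<forall>n. h n \<in> {0, 1}) \<longrightarrow>
              (\<exists>n\<in>supp h. conv (fpoly d \<gamma>) h n + v n \<ge> \<gamma>)"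
proof (intro ballI impI)
  fix h assume h: "h \<in> Rd d" and h2: "h \<noteq> (\<lambda>_. 0) \<and> (\<forall>n. h n \<in> {0, 1})"
  then obtain n where "h n \<noteq> 0" by auto
  then have "h n > 0" using h2 by (metis insertE singletonD zero_less_one)
  then obtain m where "h m > 0" "conv (fpoly d \<gamma>) h m + v m \<ge> \<gamma>" using H h by blast
  then show "\<exists>n\<in>supp h. conv (fpoly d \<gamma>) h n + v n \<ge> \<gamma>" unfolding supp_def by (intro bexI[of _ m]) auto
qed

lemma one_to_three:
  assumes v: "v \<in> recurrent d \<gamma>" and g: "\<gamma> \<ge> 2 * int d"
  shows "\<forall>h\<in>Rd d. (\<exists>n. h n > 0) \<longrightarrow>
              (\<exists>n. h n > 0 \<and> conv (fpoly d \<gamma>) h n + v n \<ge> \<gamma>)"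
proof (intro ballI impI)
  fix h assume h: "h \<in> Rd d" and "\<exists>n. h n > 0"
  then obtain n0 where n0: "h n0 > 0" by auto
  have fs: "finite (supp h)" and sp: "supp h \<subseteq> pts d" using h by (auto simp: Rd_def)
  have n0s: "n0 \<in> supp h" using n0 by (simp add: supp_def)
  define M where "M = Max (h ` supp h)"
  have hM: "h m \<le> M" for m
  proof (cases "m \<in> supp h")
    case True then show ?thesis unfolding M_def using fs by simp
  next
    case False
    then have "h m = 0" by (simp add: supp_def)
    moreover have "h n0 \<le> M" unfolding M_def using fs n0s by simp
    ultimately show ?thesis using n0 by simp
  qed
  have M1: "M \<ge> 1" using hM[of n0] n0 by simp
  have "M \<in> h ` supp h" unfolding M_def using fs n0s by (intro Max_in) auto
  define F where "F = {m \<in> supp h. h m = M}"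
  have Fne: "F \<noteq> {}" using \<open>M \<in> h ` supp h\<close> by (auto simp: F_def)
  have Ffin: "finite F" using fs by (simp add: F_def)
  have Fp: "F \<subseteq> pts d" using sp by (auto simp: F_def)
  obtain n where nF: "n \<in> F" and vn: "v n \<ge> int (nbcount d F n)"
    using v Fne Ffin Fp unfolding recurrent_def by blast
  have hn: "h n = M" using nF by (simp add: F_def)
  have len: "length n = d" using nF Fp by (auto simp: pts_def)
  have out: "h m \<le> M - 1" if "m \<notin> F" for m
  proof (cases "m \<in> supp h")
    case True then have "h m \<noteq> M" using that by (simp add: F_def)
    then show ?thesis using hM[of m] by simp
  next
    case False then show ?thesis using M1 by (simp add: supp_def)
  qed
  define A where "A = Nb d n"
  have Afin: "finite A" by (simp add: A_def Nb_fin)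
  define N where "N = card (F \<inter> A)"
  have s1: "(\<Sum>m\<in>A. h m) = (\<Sum>m\<in>A \<inter> F. h m) + (\<Sum>m\<in>A - F. h m)"
    using Afin by (simp add: sum.Int_Diff)
  have s2: "(\<Sum>m\<in>A \<inter> F. h m) = int N * M"
    by (simp add: F_def N_def Int_commute)
  have s3: "(\<Sum>m\<in>A - F. h m) \<le> int (card (A - F)) * (M - 1)"
    using out sum_bounded_above[of "A - F" h "M - 1"] by auto
  have cA: "card (A - F) + N = card A"
    unfolding N_def using Afin by (metis Int_commute card_Diff_subset_Int card_Int_Diff finite_Int add.commute)
  have cA2: "card A \<le> 2 * d" by (simp add: A_def Nb_card)
  have nb: "nbcount d F n = N" by (simp add: nbcount_Nb N_def A_def)
  have conv: "conv (fpoly d \<gamma>) h n = \<gamma> * M - (\<Sum>m\<in>A. h m)"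
    using conv_formula[OF len] hn by (simp add: A_def)
  have c1: "int (card (A - F)) \<le> 2 * int d - int N" using cA cA2 by linarith
  have c2: "int (card (A - F)) * (M - 1) \<le> (2 * int d - int N) * (M - 1)"
    using c1 M1 by (intro mult_right_mono) auto
  have c3: "(\<gamma> - 2 * int d) * (M - 1) \<ge> 0" using g M1 by simp
  have "conv (fpoly d \<gamma>) h n + v n \<ge> \<gamma>"
  proof -
    have "conv (fpoly d \<gamma>) h n + v n \<ge> \<gamma> * M - int N * M - (2 * int d - int N) * (M - 1) + int N"
      using conv s1 s2 s3 c2 vn nb by linarith
    moreover have "\<gamma> * M - int N * M - (2 * int d - int N) * (M - 1) + int N = \<gamma> + (\<gamma> - 2 * int d) * (M - 1)"
      by (simp add: algebra_simps)
    ultimately show ?thesis using c3 by linarith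
  qed
  then show "\<exists>n. h n > 0 \<and> conv (fpoly d \<gamma>) h n + v n \<ge> \<gamma>" using hn M1 by (intro exI[of _ n]) auto
qed

lemma conv_neg: "conv a (\<lambda>n. - g n) m = - conv a g m"
  by (simp add: conv_def sum_negf)

theorem proposition4p1:
  fixes d :: nat and \<gamma> :: int and v :: "int list \<Rightarrow> int"
  assumes "d \<ge> 2" and "\<gamma> \<ge> 2 * int d" and "v \<in> Lambda d \<gamma>"
  shows "(v \<in> recurrent d \<gamma> \<longleftrightarrow>
           (\<forall>h\<in>Rd d. h \<noteq> (\<lambda>_. 0) \<and> (\<forall>n. h n \<in> {0, 1}) \<longrightarrow>
              (\<exists>n\<in>supp h. conv (fpoly d \<gamma>) h n + v n \<ge> \<gamma>)))
       \<and> (v \<in> recurrent d \<gamma> \<longleftrightarrow>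
           (\<forall>h\<in>Rd d. (\<exists>n. h n > 0) \<longrightarrow>
              (\<exists>n. h n > 0 \<and> conv (fpoly d \<gamma>) h n + v n \<ge> \<gamma>)))
       \<and> (\<forall>w w'. w \<in> recurrent d \<gamma> \<and> w' \<in> recurrent d \<gamma> \<and>
              (\<lambda>n. w n - w' n) \<in> Rd d \<and> (\<lambda>n. w n - w' n) \<noteq> (\<lambda>_. 0) \<longrightarrow>
              \<not> (\<exists>g\<in>Rd d. (\<lambda>n. w n - w' n) = conv (fpoly d \<gamma>) g))"
proof (intro conjI allI impI)
  show "v \<in> recurrent d \<gamma> \<longleftrightarrow> (\<forall>h\<in>Rd d. h \<noteq> (\<lambda>_. 0) \<and> (\<forall>n. h n \<in> {0, 1}) \<longrightarrow>
              (\<exists>n\<in>supp h. conv (fpoly d \<gamma>) h n + v n \<ge> \<gamma>))"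
    using two_to_one[OF assms(3)] three_to_two one_to_three[OF _ assms(2)] by blast
  show "v \<in> recurrent d \<gamma> \<longleftrightarrow> (\<forall>h\<in>Rd d. (\<exists>n. h n > 0) \<longrightarrow>
              (\<exists>n. h n > 0 \<and> conv (fpoly d \<gamma>) h n + v n \<ge> \<gamma>))"
    using two_to_one[OF assms(3)] three_to_two one_to_three[OF _ assms(2)] by blast
next
  fix w w' :: "int list \<Rightarrow> int"
  assume A: "w \<in> recurrent d \<gamma> \<and> w' \<in> recurrent d \<gamma> \<and>
              (\<lambda>n. w n - w' n) \<in> Rd d \<and> (\<lambda>n. w n - w' n) \<noteq> (\<lambda>_. 0)"
  have le: "u n \<le> \<gamma> - 1" if "u \<in> recurrent d \<gamma>" for u n
  proof -
    have "u \<in> Lambda d \<gamma>" using that by (simp add: recurrent_def)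
    then show ?thesis using assms(1,2) by (cases "n \<in> pts d") (auto simp: Lambda_def)
  qed
  show "\<not> (\<exists>g\<in>Rd d. (\<lambda>n. w n - w' n) = conv (fpoly d \<gamma>) g)"
  proof
    assume "\<exists>g\<in>Rd d. (\<lambda>n. w n - w' n) = conv (fpoly d \<gamma>) g"
    then obtain g where g: "g \<in> Rd d" and e: "(\<lambda>n. w n - w' n) = conv (fpoly d \<gamma>) g" by blast
    have e': "w n - w' n = conv (fpoly d \<gamma>) g n" for n using e by metis
    have "g \<noteq> (\<lambda>_. 0)"
    proof
      assume "g = (\<lambda>_. 0)"
      then have "conv (fpoly d \<gamma>) g = (\<lambda>_. 0)" by (simp add: conv_def fun_eq_iff)
      then show False using A e by simp
    qed
    then obtain n0 where "g n0 \<noteq> 0" by auto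
    show False
    proof (cases "g n0 > 0")
      case True
      then obtain n where "conv (fpoly d \<gamma>) g n + w' n \<ge> \<gamma>"
        using one_to_three[OF _ assms(2), of w'] A g by blast
      then show False using e'[of n] le[of w n] A by linarith
    next
      case False
      define g' where "g' = (\<lambda>n. - g n)"
      have "g' \<in> Rd d" using g by (simp add: Rd_def g'_def supp_def)
      moreover have "g' n0 > 0" using False \<open>g n0 \<noteq> 0\<close> by (simp add: g'_def)
      ultimately obtain n where "conv (fpoly d \<gamma>) g' n + w n \<ge> \<gamma>"
        using one_to_three[OF _ assms(2), of w] A by blast
      then show False using e'[of n] le[of w' n] A conv_neg[of "fpoly d \<gamma>" g n] by (simp add: g'_def)
    qed
  qed
qed

end
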